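(* Let $A=\{0,1\}$, $n\ge 1$, and let $\rho\subseteq A^n$ with $\rho\neq A^n$. Then $\rho$ is a key relation if and only if there exist linear equations $L_1,\dots,L_m$ ($m\ge 1$), each of the form $c_1x_1+\dots+c_nx_n=c_0$ with $c_0,\dots,c_n\in\{0,1\}$ and addition modulo $2$, such that $\rho=\{(x_1,\dots,x_n)\in A^n : \text{at least one of } L_1,\dots,L_m \text{ holds}\}$, i.e. $\rho(x_1,\dots,x_n)=L_1\vee\dots\vee L_m$.
   Context: A relation of arity $n$ on a finite set $A$ is a subset $\rho\subseteq A^n$. A unary vector-function is a tuple $\Psi=(\psi_1,\dots,\psi_n)$ of maps $\psi_i:A\to A$, acting on tuples coordinatewise: $\Psi(a_1,\dots,a_n)=(\psi_1(a_1),\dots,\psi_n(a_n))$; $\Psi$ preserves $\rho$ if $\Psi(\alpha)\in\rho$ for all $\alpha\in\rho$. A relation $\rho\subseteq A^n$ is a key relation if there is a tuple $\beta\in A^n\setminus\rho$ (called a key tuple for $\rho$) such that for every $\alpha\in A^n\setminus\rho$ there exists a unary vector-function $\Psi$ preserving $\rho$ with $\Psi(\alpha)=\beta$. *)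

theory Defs
  imports Main
begin

definition tuples :: "'a set \<Rightarrow> nat \<Rightarrow> 'a list set" where
  "tuples A n = {xs. length xs = n \<and> set xs \<subseteq> A}"

definition is_vector_fun :: "'a set \<Rightarrow> nat \<Rightarrow> ('a \<Rightarrow> 'a) list \<Rightarrow> bool" where
  "is_vector_fun A n Psi \<longleftrightarrow> length Psi = n \<and> (\<forall>f\<in>set Psi. f ` A \<subseteq> A)"

definition vf_apply :: "('a \<Rightarrow> 'a) list \<Rightarrow> 'a list \<Rightarrow> 'a list" where
  "vf_apply Psi xs = map2 (\<lambda>f x. f x) Psi xs"

definition vf_preserves :: "('a \<Rightarrow> 'a) list \<Rightarrow> 'a list set \<Rightarrow> bool" where
  "vf_preserves Psi \<rho> \<longleftrightarrow> (\<forall>\<alpha>\<in>\<rho>. vf_apply Psi \<alpha> \<in> \<rho>)"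

definition key_tuple :: "'a set \<Rightarrow> nat \<Rightarrow> 'a list set \<Rightarrow> 'a list \<Rightarrow> bool" where
  "key_tuple A n \<rho> \<beta> \<longleftrightarrow> \<beta> \<in> tuples A n - \<rho> \<and>
     (\<forall>\<alpha>\<in>tuples A n - \<rho>. \<exists>Psi. is_vector_fun A n Psi \<and> vf_preserves Psi \<rho> \<and> vf_apply Psi \<alpha> = \<beta>)"

definition key_relation :: "'a set \<Rightarrow> nat \<Rightarrow> 'a list set \<Rightarrow> bool" where
  "key_relation A n \<rho> \<longleftrightarrow> \<rho> \<subseteq> tuples A n \<and> (\<exists>\<beta>. key_tuple A n \<rho> \<beta>)"

text \<open>A linear equation c_1 x_1 + ... + c_n x_n = c_0 over Z/2, given as (coefficient list, c_0).\<close>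
definition lin_eq_wf :: "nat \<Rightarrow> nat list \<times> nat \<Rightarrow> bool" where
  "lin_eq_wf n L \<longleftrightarrow> length (fst L) = n \<and> set (fst L) \<subseteq> {0,1} \<and> snd L \<in> {0,1}"

definition lin_eq_holds :: "nat list \<times> nat \<Rightarrow> nat list \<Rightarrow> bool" where
  "lin_eq_holds L x \<longleftrightarrow> (\<Sum>i<length x. fst L ! i * x ! i) mod 2 = snd L"

end

theory Submission
  imports Defs
begin

definition dot :: "nat list \<Rightarrow> nat list \<Rightarrow> nat" where
  "dot c x = (\<Sum>i<length x. c ! i * x ! i) mod 2"

definition vadd :: "nat list \<Rightarrow> nat list \<Rightarrow> nat list" where
  "vadd x y = map2 (\<lambda>a b. (a + b) mod 2) x y"

lemma dot_lt: "dot c x < 2" by (simp add: dot_def)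

lemma dot_mod[simp]: "dot c x mod 2 = dot c x" by (simp add: dot_def)

lemma holds_dot: "lin_eq_holds L x \<longleftrightarrow> dot (fst L) x = snd L"
  by (simp add: lin_eq_holds_def dot_def)

lemma length_vadd[simp]: "length (vadd x y) = min (length x) (length y)"
  by (simp add: vadd_def)

lemma nth_vadd[simp]: "i < length x \<Longrightarrow> i < length y \<Longrightarrow> vadd x y ! i = (x ! i + y ! i) mod 2"
  by (simp add: vadd_def)

lemma vadd_Cons[simp]: "vadd (a # x) (b # y) = ((a + b) mod 2) # vadd x y"
  by (simp add: vadd_def)

lemma dot_Cons[simp]: "dot (c0 # c) (a # x) = (c0 * a + dot c x) mod 2"
  unfolding dot_def length_Cons sum.lessThan_Suc_shift by (simp add: mod_add_right_eq)

lemma dot_vadd: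
  assumes "length x = length y"
  shows "dot c (vadd x y) = (dot c x + dot c y) mod 2"
proof -
  let ?n = "length x"
  have "dot c (vadd x y) = (\<Sum>i<?n. c!i * ((x!i + y!i) mod 2)) mod 2"
    using assms by (simp add: dot_def)
  also have "\<dots> = (\<Sum>i<?n. (c!i * ((x!i + y!i) mod 2)) mod 2) mod 2"
    by (simp add: mod_sum_eq)
  also have "\<dots> = (\<Sum>i<?n. (c!i * x!i + c!i * y!i) mod 2) mod 2"
    by (rule arg_cong[where f="\<lambda>t. t mod 2"], rule sum.cong, rule refl,
        metis distrib_left mod_mult_right_eq)
  also have "\<dots> = (\<Sum>i<?n. c!i * x!i + c!i * y!i) mod 2"
    by (simp add: mod_sum_eq)
  also have "\<dots> = (dot c x + dot c y) mod 2"
    using assms by (simp add: dot_def sum.distrib mod_add_eq)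
  finally show ?thesis .
qed

lemma dot_zero: "length x \<le> n \<Longrightarrow> dot (replicate n 0) x = 0"
  by (simp add: dot_def)

lemma tuples_Suc: "v \<in> tuples A (Suc n) \<longleftrightarrow> (\<exists>a x. v = a # x \<and> a \<in> A \<and> x \<in> tuples A n)"
  by (cases v) (auto simp: tuples_def)

lemma tuples_0: "tuples A 0 = {[]}"
  by (auto simp: tuples_def)

lemma vadd_tuples: "x \<in> tuples {0,1} n \<Longrightarrow> y \<in> tuples {0,1} n \<Longrightarrow> vadd x y \<in> tuples {0,1} n"
  by (auto simp: tuples_def vadd_def set_zip)

lemma bit01: "(a::nat) \<in> {0,1} \<Longrightarrow> a = 0 \<or> a = 1" by auto

lemma nth01: "x \<in> tuples {0,1} n \<Longrightarrow> i < n \<Longrightarrow> x ! i = 0 \<or> x ! i = 1"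
  unfolding tuples_def using nth_mem by fastforce

lemma vadd_cancel: "x \<in> tuples {0,1} n \<Longrightarrow> y \<in> tuples {0,1} n \<Longrightarrow> vadd (vadd x y) y = x"
  apply (rule nth_equalityI)
   apply (simp add: tuples_def)
  apply (simp add: tuples_def)
  subgoal for i using nth01[of x n i] nth01[of y n i] by (auto simp: tuples_def)
  done

lemma vadd_self: "x \<in> tuples {0,1} n \<Longrightarrow> vadd x x = replicate n 0"
  apply (rule nth_equalityI)
   apply (simp add: tuples_def)
  subgoal for i using nth01[of x n i] by (auto simp: tuples_def)
  done

lemma tl_vadd: "tl (vadd u v) = vadd (tl u) (tl v)"
  by (cases u; cases v) (auto simp: vadd_def)

lemma sep:
  "V \<subseteq> tuples {0,1} n \<Longrightarrow> (\<forall>u\<in>V. \<forall>v\<in>V. vadd u v \<in> V) \<Longrightarrow> replicate n 0 \<in> V \<Longrightarrow>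
   y \<in> tuples {0,1} n \<Longrightarrow> y \<notin> V \<Longrightarrow>
   \<exists>c\<in>tuples {0,1} n. (\<forall>v\<in>V. dot c v = 0) \<and> dot c y = 1"
proof (induction n arbitrary: V y)
  case 0
  then show ?case by (auto simp: tuples_0)
next
  case (Suc n)
  have Vs: "\<exists>a x. v = a # x \<and> a \<in> {0,1} \<and> x \<in> tuples {0,1} n" if "v \<in> V" for v
  proof -
    have "v \<in> tuples {0,1} (Suc n)" using Suc.prems(1) that by blast
    then show ?thesis by (simp only: tuples_Suc)
  qed
  obtain a y' where y: "y = a # y'" "a \<in> {0,1}" "y' \<in> tuples {0,1} n"
    using Suc.prems(4) by (auto simp only: tuples_Suc)
  have rep0: "replicate n 0 \<in> tuples {0,1} n" by (auto simp: tuples_def)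
  show ?case
  proof (cases "\<forall>v\<in>V. hd v = 0")
    case A: True
    show ?thesis
    proof (cases "a = 1")
      case True
      let ?c = "1 # replicate n (0::nat)"
      have "?c \<in> tuples {0,1} (Suc n)" by (auto simp: tuples_def)
      moreover have "\<forall>v\<in>V. dot ?c v = 0"
      proof
        fix v assume "v \<in> V"
        then obtain b x where "v = b # x" "x \<in> tuples {0,1} n" using Vs by blast
        with A \<open>v \<in> V\<close> show "dot ?c v = 0" by (auto simp: dot_zero tuples_def)
      qed
      moreover have "dot ?c y = 1" using y True by (auto simp: dot_zero tuples_def)
      ultimately show ?thesis by blast
    next
      case False
      with y have a0: "a = 0" by auto
      let ?V = "tl ` V"
      have "?V \<subseteq> tuples {0,1} n" using Vs by fastforce
      moreover have "\<forall>u\<in>?V. \<forall>v\<in>?V. vadd u v \<in> ?V"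
        using Suc.prems(2) by (auto simp: tl_vadd[symmetric])
      moreover have "replicate n 0 \<in> ?V"
        using Suc.prems(3) by (metis list.sel(3) replicate_Suc image_eqI)
      moreover have "y' \<notin> ?V"
      proof
        assume "y' \<in> ?V"
        then obtain v where v: "v \<in> V" "y' = tl v" by blast
        then obtain b x where "v = b # x" using Vs by blast
        with A v have "v = y" using y a0 by auto
        with v Suc.prems(5) show False by simp
      qed
      ultimately obtain c' where c': "c' \<in> tuples {0,1} n" "\<forall>v\<in>?V. dot c' v = 0" "dot c' y' = 1"
        using Suc.IH[of ?V y'] y(3) by blast
      let ?c = "0 # c'"
      have "?c \<in> tuples {0,1} (Suc n)" using c' by (auto simp: tuples_def)
      moreover have "\<forall>v\<in>V. dot ?c v = 0"
      proof
        fix v assume "v \<in> V"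
        then obtain b x where "v = b # x" using Vs by blast
        then have "x \<in> ?V" using \<open>v \<in> V\<close> by (metis image_eqI list.sel(3))
        then have "dot c' x = 0" using c'(2) by (rule bspec[rotated])
        then show "dot ?c v = 0" using \<open>v = b # x\<close> by simp
      qed
      moreover have "dot ?c y = 1" using y c' by simp
      ultimately show ?thesis by blast
    qed
  next
    case False
    then obtain w where w: "w \<in> V" "hd w \<noteq> 0" by blast
    then obtain w' where w': "w = 1 # w'" "w' \<in> tuples {0,1} n" using Vs by fastforce
    let ?V = "tl ` {v\<in>V. hd v = 0}"
    have "?V \<subseteq> tuples {0,1} n" using Vs by fastforce
    moreover have "\<forall>u\<in>?V. \<forall>v\<in>?V. vadd u v \<in> ?V"
    proof (intro ballI)
      fix u v assume "u \<in> ?V" "v \<in> ?V"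
      then obtain u0 v0 where "u0 \<in> V" "hd u0 = 0" "u = tl u0" "v0 \<in> V" "hd v0 = 0" "v = tl v0"
        by blast
      moreover obtain x1 where "u0 = 0 # x1" using Vs \<open>u0 \<in> V\<close> \<open>hd u0 = 0\<close> by fastforce
      moreover obtain x2 where "v0 = 0 # x2" using Vs \<open>v0 \<in> V\<close> \<open>hd v0 = 0\<close> by fastforce
      moreover have "vadd u0 v0 \<in> V" using Suc.prems(2) \<open>u0 \<in> V\<close> \<open>v0 \<in> V\<close> by blast
      ultimately have "vadd u0 v0 \<in> V" "hd (vadd u0 v0) = 0" "vadd u v = tl (vadd u0 v0)"
        by auto
      then show "vadd u v \<in> ?V" by blast
    qed
    moreover have "replicate n 0 \<in> ?V"
      using Suc.prems(3) by (auto intro!: image_eqI[where x="replicate (Suc n) 0"])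
    moreover
    define z where "z = (if a = 0 then y else vadd y w)"
    have z: "z = 0 # (if a = 0 then y' else vadd y' w')"
      using y w' by (auto simp: z_def)
    have zV: "z \<notin> V"
    proof
      assume "z \<in> V"
      show False
      proof (cases "a = 0")
        case True then show False using \<open>z \<in> V\<close> Suc.prems(5) z_def by simp
      next
        case False
        then have "vadd z w \<in> V" using \<open>z \<in> V\<close> w Suc.prems(2) by blast
        moreover have "vadd z w = y"
          using False z_def vadd_cancel[OF Suc.prems(4)] Suc.prems(1) w by auto
        ultimately show False using Suc.prems(5) by simp
      qed
    qed
    have "tl z \<notin> ?V"
    proof
      assume "tl z \<in> ?V"
      then obtain v where v: "v \<in> V" "hd v = 0" "tl z = tl v" by blast
      then obtain x where "v = 0 # x" using Vs by fastforce
      with v z have "v = z" by simp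
      with v zV show False by simp
    qed
    moreover have "tl z \<in> tuples {0,1} n"
      using z y w' vadd_tuples by auto
    ultimately obtain c' where c': "c' \<in> tuples {0,1} n" "\<forall>v\<in>?V. dot c' v = 0" "dot c' (tl z) = 1"
      using Suc.IH[of ?V "tl z"] by blast
    let ?c = "dot c' w' # c'"
    have "?c \<in> tuples {0,1} (Suc n)" using c' dot_lt[of c' w'] by (auto simp: tuples_def)
    moreover have "\<forall>v\<in>V. dot ?c v = 0"
    proof
      fix v assume vV: "v \<in> V"
      then obtain b x where bx: "v = b # x" "b \<in> {0,1}" "x \<in> tuples {0,1} n" using Vs by blast
      show "dot ?c v = 0"
      proof (cases "b = 0")
        case True
        then have "x \<in> ?V" using vV bx by force
        then have "dot c' x = 0" using c'(2) by (rule bspec[rotated])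
        then show ?thesis using bx True by simp
      next
        case False
        then have b1: "b = 1" using bx by auto
        have "vadd v w \<in> V" using vV w Suc.prems(2) by blast
        moreover have "vadd v w = 0 # vadd x w'" using bx b1 w' by simp
        ultimately have "vadd x w' \<in> ?V" by force
        then have "dot c' (vadd x w') = 0" using c' by blast
        then have "(dot c' x + dot c' w') mod 2 = 0"
          using dot_vadd[of x w' c'] bx w' by (simp add: tuples_def)
        then show ?thesis using bx b1 by (simp add: add.commute)
      qed
    qed
    moreover have "dot ?c y = 1"
    proof (cases "a = 0")
      case True then show ?thesis using c' z y by simp
    next
      case False
      then have a1: "a = 1" using y by auto
      have "dot c' (vadd y' w') = 1" using c' z False by simp
      then have "(dot c' y' + dot c' w') mod 2 = 1"
        using dot_vadd[of y' w' c'] y w' by (simp add: tuples_def)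
      then show ?thesis using y a1 by (simp add: add.commute)
    qed
    ultimately show ?thesis by blast
  qed
qed

lemma length_vf_apply[simp]: "length (vf_apply Psi x) = min (length Psi) (length x)"
  by (simp add: vf_apply_def)

lemma nth_vf_apply[simp]: "i < length Psi \<Longrightarrow> i < length x \<Longrightarrow> vf_apply Psi x ! i = (Psi ! i) (x ! i)"
  by (simp add: vf_apply_def)

lemma coord:
  assumes "f ` {0,1} \<subseteq> {0::nat,1}" "a \<in> {0,1}" "t \<in> {0,1}"
  shows "f t = (if f 0 = f 1 then f a else (t + a + f a) mod 2)"
proof -
  have "f 0 \<in> {0,1}" "f 1 \<in> {0,1}" using assms(1) by auto
  then show ?thesis using assms(2,3) by auto
qed

lemma tuplesI:
  assumes "length x = n" "\<And>i. i < n \<Longrightarrow> x ! i \<in> {0,1}"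
  shows "x \<in> tuples {0,1} n"
proof -
  have "\<forall>y\<in>set x. y \<in> {0,1}" using assms(2) assms(1) by (metis in_set_conv_nth)
  then show ?thesis unfolding tuples_def using assms(1) by blast
qed

lemma core:
  assumes kt: "key_tuple {0,1} n \<rho> \<beta>"
    and x: "x \<in> tuples {0,1} n - \<rho>" and al: "\<alpha> \<in> tuples {0,1} n - \<rho>"
  shows "vadd (vadd x \<alpha>) \<beta> \<in> tuples {0,1} n - \<rho>"
proof -
  let ?T = "tuples {0::nat,1} n"
  let ?S = "?T - \<rho>"
  have pre: "y \<in> ?S" if "vf_preserves Psi \<rho>" "y \<in> ?T" "vf_apply Psi y \<in> ?S" for Psi y
    using that by (auto simp: vf_preserves_def)
  have b: "\<beta> \<in> ?S" using kt by (simp add: key_tuple_def)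
  obtain Psi where P: "is_vector_fun {0,1} n Psi" "vf_preserves Psi \<rho>" "vf_apply Psi \<alpha> = \<beta>"
    using kt al unfolding key_tuple_def by blast
  obtain Phi where F: "is_vector_fun {0,1} n Phi" "vf_preserves Phi \<rho>" "vf_apply Phi x = \<beta>"
    using kt x unfolding key_tuple_def by blast
  have lP: "length Psi = n" and lF: "length Phi = n" using P F by (auto simp: is_vector_fun_def)
  have lx: "length x = n" and la: "length \<alpha> = n" and lb: "length \<beta> = n"
    using x al b by (auto simp: tuples_def)
  have x01: "x ! i = 0 \<or> x ! i = 1" if "i < n" for i using nth01 x that by blast
  have a01: "\<alpha> ! i = 0 \<or> \<alpha> ! i = 1" if "i < n" for i using nth01 al that by blast
  have b01: "\<beta> ! i = 0 \<or> \<beta> ! i = 1" if "i < n" for i using nth01 b that by blast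
  have Pv: "(Psi ! i) (\<alpha> ! i) = \<beta> ! i" if "i < n" for i
    using arg_cong[OF P(3), of "\<lambda>l. l ! i"] that lP la by simp
  have Fv: "(Phi ! i) (x ! i) = \<beta> ! i" if "i < n" for i
    using arg_cong[OF F(3), of "\<lambda>l. l ! i"] that lF lx by simp
  have Pc: "(Psi ! i) t = (if (Psi ! i) 0 = (Psi ! i) 1 then \<beta> ! i else (t + \<alpha> ! i + \<beta> ! i) mod 2)"
    if "i < n" "t \<in> {0,1}" for i t
  proof -
    have "(Psi ! i) ` {0,1} \<subseteq> {0,1}" using P(1) lP that(1) by (auto simp: is_vector_fun_def)
    then show ?thesis using coord[of "Psi ! i" "\<alpha> ! i" t] a01[OF that(1)] that(2) Pv[OF that(1)] by auto
  qed
  have Fc: "(Phi ! i) t = (if (Phi ! i) 0 = (Phi ! i) 1 then \<beta> ! i else (t + x ! i + \<beta> ! i) mod 2)"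
    if "i < n" "t \<in> {0,1}" for i t
  proof -
    have "(Phi ! i) ` {0,1} \<subseteq> {0,1}" using F(1) lF that(1) by (auto simp: is_vector_fun_def)
    then show ?thesis using coord[of "Phi ! i" "x ! i" t] x01[OF that(1)] that(2) Fv[OF that(1)] by auto
  qed
  define p where "p = map (\<lambda>i. if (Psi ! i) 0 = (Psi ! i) 1 then \<beta> ! i else \<alpha> ! i) [0..<n]"
  define r where "r = map (\<lambda>i. if (Psi ! i) 0 = (Psi ! i) 1 then \<beta> ! i else x ! i) [0..<n]"
  define q where "q = vadd (vadd x \<alpha>) \<beta>"
  have pT: "p \<in> ?T" unfolding p_def using a01 b01 by (intro tuplesI) auto
  have rT: "r \<in> ?T" unfolding r_def using x01 b01 by (intro tuplesI) auto
  have qT: "q \<in> ?T" unfolding q_def using x al b by (intro vadd_tuples) auto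
  have pi: "p ! i = (if (Psi ! i) 0 = (Psi ! i) 1 then \<beta> ! i else \<alpha> ! i)" if "i < n" for i
    using that by (simp add: p_def)
  have ri: "r ! i = (if (Psi ! i) 0 = (Psi ! i) 1 then \<beta> ! i else x ! i)" if "i < n" for i
    using that by (simp add: r_def)
  have qi: "q ! i = ((x ! i + \<alpha> ! i) mod 2 + \<beta> ! i) mod 2" if "i < n" for i
    using that lx la lb by (simp add: q_def)
  have "vf_apply Psi p = \<beta>"
  proof (rule nth_equalityI)
    show "length (vf_apply Psi p) = length \<beta>" using pT lP lb by (simp add: tuples_def)
    fix i assume "i < length (vf_apply Psi p)"
    then have i: "i < n" using lP by simp
    have "p ! i \<in> {0,1}" using pi[OF i] a01[OF i] b01[OF i] by auto
    then show "vf_apply Psi p ! i = \<beta> ! i"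
      using i pT lP Pc[OF i, of "p ! i"] pi[OF i] a01[OF i] b01[OF i] by (auto simp: tuples_def)
  qed
  then have pS: "p \<in> ?S" using pre[OF P(2) pT] b by simp
  define z where "z = vf_apply Phi r"
  have zi: "z ! i = (if (Psi ! i) 0 = (Psi ! i) 1 then (Phi ! i) (\<beta> ! i) else \<beta> ! i)" if i: "i < n" for i
  proof -
    have "r ! i \<in> {0,1}" using ri[OF i] x01[OF i] b01[OF i] by auto
    then show ?thesis
      using i rT lF Fc[OF i, of "r ! i"] ri[OF i] x01[OF i] b01[OF i] by (auto simp: tuples_def z_def)
  qed
  have zT: "z \<in> ?T"
  proof (rule tuplesI)
    show "length z = n" using rT lF by (simp add: z_def tuples_def)
    fix i assume i: "i < n"
    show "z ! i \<in> {0,1}" using zi[OF i] Fc[OF i, of "\<beta> ! i"] b01[OF i] x01[OF i] by auto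
  qed
  have "vf_apply Psi z = p"
  proof (rule nth_equalityI)
    show "length (vf_apply Psi z) = length p" using zT pT lP by (simp add: tuples_def)
    fix i assume "i < length (vf_apply Psi z)"
    then have i: "i < n" using lP by simp
    have "z ! i \<in> {0,1}" using zT i nth01 by blast
    then show "vf_apply Psi z ! i = p ! i"
      using i zT lP Pc[OF i, of "z ! i"] pi[OF i] zi[OF i] a01[OF i] b01[OF i] by (auto simp: tuples_def)
  qed
  then have zS: "z \<in> ?S" using pre[OF P(2) zT] pS by simp
  have rS: "r \<in> ?S" using pre[OF F(2) rT] zS by (simp add: z_def)
  have "vf_apply Psi q = r"
  proof (rule nth_equalityI)
    show "length (vf_apply Psi q) = length r" using qT rT lP by (simp add: tuples_def)
    fix i assume "i < length (vf_apply Psi q)"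
    then have i: "i < n" using lP by simp
    have "q ! i \<in> {0,1}" using qT i nth01 by blast
    then show "vf_apply Psi q ! i = r ! i"
      using i qT lP Pc[OF i, of "q ! i"] qi[OF i] ri[OF i] x01[OF i] a01[OF i] b01[OF i]
      by (auto simp: tuples_def)
  qed
  then have "q \<in> ?S" using pre[OF P(2) qT] rS by simp
  then show ?thesis by (simp add: q_def)
qed

lemma vadd4:
  assumes "s \<in> tuples {0,1} n" "t \<in> tuples {0,1} n" "b \<in> tuples {0,1} n"
  shows "vadd (vadd s b) (vadd t b) = vadd (vadd (vadd s t) b) b"
proof (rule nth_equalityI)
  show "length (vadd (vadd s b) (vadd t b)) = length (vadd (vadd (vadd s t) b) b)"
    using assms by (simp add: tuples_def)
  fix i assume "i < length (vadd (vadd s b) (vadd t b))"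
  then have i: "i < n" using assms by (simp add: tuples_def)
  show "vadd (vadd s b) (vadd t b) ! i = vadd (vadd (vadd s t) b) b ! i"
    using i assms nth01[OF assms(1) i] nth01[OF assms(2) i] nth01[OF assms(3) i]
    by (auto simp: tuples_def)
qed

lemma lt2: "(a::nat) < 2 \<Longrightarrow> a = 0 \<or> a = 1" by auto

lemma mod2_01: "(m::nat) mod 2 = 0 \<or> m mod 2 = 1" by presburger

theorem mainTheorem1:
  fixes n :: nat and \<rho> :: "nat list set"
  assumes "n \<ge> 1"
    and "\<rho> \<subseteq> tuples {0,1} n"
    and "\<rho> \<noteq> tuples {0,1} n"
  shows "key_relation {0,1} n \<rho> \<longleftrightarrow>
    (\<exists>Ls :: (nat list \<times> nat) list. Ls \<noteq> [] \<and> (\<forall>L\<in>set Ls. lin_eq_wf n L) \<and>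
       \<rho> = {x \<in> tuples {0,1} n. \<exists>L\<in>set Ls. lin_eq_holds L x})"
proof -
  let ?T = "tuples {0::nat,1} n"
  let ?S = "?T - \<rho>"
  have finT: "finite ?T"
  proof (rule finite_subset)
    show "?T \<subseteq> {xs. set xs \<subseteq> {0::nat,1} \<and> length xs = n}" by (auto simp: tuples_def)
    show "finite {xs. set xs \<subseteq> {0::nat,1} \<and> length xs = n}"
      by (rule finite_lists_length_eq) simp
  qed
  have repT: "replicate n 0 \<in> ?T" by (auto simp: tuples_def)
  show ?thesis
  proof
    assume "key_relation {0,1} n \<rho>"
    then obtain \<beta> where kt: "key_tuple {0,1} n \<rho> \<beta>" by (auto simp: key_relation_def)
    then have bS: "\<beta> \<in> ?S" by (simp add: key_tuple_def)
    define V where "V = (\<lambda>s. vadd s \<beta>) ` ?S"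
    have VT: "V \<subseteq> ?T" unfolding V_def using bS vadd_tuples by blast
    have Vadd: "\<forall>u\<in>V. \<forall>v\<in>V. vadd u v \<in> V"
    proof (intro ballI)
      fix u v assume "u \<in> V" "v \<in> V"
      then obtain s t where st: "s \<in> ?S" "t \<in> ?S" "u = vadd s \<beta>" "v = vadd t \<beta>"
        by (auto simp: V_def)
      have "vadd (vadd s t) \<beta> \<in> ?S" using core[OF kt st(1) st(2)] .
      moreover have "vadd u v = vadd (vadd (vadd s t) \<beta>) \<beta>"
        using vadd4[of s n t \<beta>] st bS by auto
      ultimately show "vadd u v \<in> V" by (auto simp: V_def)
    qed
    have V0: "replicate n 0 \<in> V"
      using vadd_self[of \<beta> n] bS by (auto simp: V_def intro!: image_eqI[where x=\<beta>])
    define E where "E = {(c, 1 - dot c \<beta>) | c. c \<in> ?T \<and> (\<forall>s\<in>?S. dot c s = dot c \<beta>)}"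
    have "E \<subseteq> (\<lambda>c. (c, 1 - dot c \<beta>)) ` ?T" by (auto simp: E_def)
    then have "finite E" using finT finite_subset by blast
    then obtain Ls where Ls: "set Ls = E" using finite_list by blast
    have dz: "dot (replicate n 0) s = 0" if "s \<in> ?T" for s
      using that by (intro dot_zero) (simp add: tuples_def)
    have "(replicate n 0, 1) \<in> E"
      unfolding E_def using repT dz bS by force
    then have "Ls \<noteq> []" using Ls by auto
    moreover have "\<forall>L\<in>set Ls. lin_eq_wf n L"
    proof
      fix L assume "L \<in> set Ls"
      then obtain c where "L = (c, 1 - dot c \<beta>)" "c \<in> ?T" using Ls by (auto simp: E_def)
      then show "lin_eq_wf n L" using lt2[OF dot_lt[of c \<beta>]]
        by (auto simp: lin_eq_wf_def tuples_def)
    qed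
    moreover have "\<rho> = {x \<in> ?T. \<exists>L\<in>set Ls. lin_eq_holds L x}"
    proof (intro equalityI subsetI)
      fix y assume yr: "y \<in> \<rho>"
      then have yT: "y \<in> ?T" using assms(2) by blast
      have "vadd y \<beta> \<notin> V"
      proof
        assume "vadd y \<beta> \<in> V"
        then obtain s where s: "s \<in> ?S" "vadd y \<beta> = vadd s \<beta>" by (auto simp: V_def)
        then have "vadd (vadd y \<beta>) \<beta> = vadd (vadd s \<beta>) \<beta>" by simp
        then have "y = s" using vadd_cancel[OF yT, of \<beta>] vadd_cancel[of s n \<beta>] s(1) bS by auto
        then show False using s yr by simp
      qed
      moreover have "vadd y \<beta> \<in> ?T" using yT bS vadd_tuples by blast
      ultimately obtain c where c: "c \<in> ?T" "\<forall>v\<in>V. dot c v = 0" "dot c (vadd y \<beta>) = 1"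
        using sep[OF VT Vadd V0] by blast
      have "\<forall>s\<in>?S. dot c s = dot c \<beta>"
      proof
        fix s assume sS: "s \<in> ?S"
        then have "vadd s \<beta> \<in> V" by (auto simp: V_def)
        then have "dot c (vadd s \<beta>) = 0" using c(2) by blast
        then have "(dot c s + dot c \<beta>) mod 2 = 0"
          using dot_vadd[of s \<beta> c] sS bS by (simp add: tuples_def)
        then show "dot c s = dot c \<beta>"
          using lt2[OF dot_lt[of c s]] lt2[OF dot_lt[of c \<beta>]] by auto
      qed
      then have "(c, 1 - dot c \<beta>) \<in> set Ls" using Ls c(1) by (auto simp: E_def)
      moreover have "(dot c y + dot c \<beta>) mod 2 = 1"
        using c(3) dot_vadd[of y \<beta> c] yT bS by (simp add: tuples_def)
      then have "dot c y = 1 - dot c \<beta>"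
        using lt2[OF dot_lt[of c y]] lt2[OF dot_lt[of c \<beta>]] by auto
      ultimately show "y \<in> {x \<in> ?T. \<exists>L\<in>set Ls. lin_eq_holds L x}"
        using yT by (force simp: holds_dot)
    next
      fix x assume "x \<in> {x \<in> ?T. \<exists>L\<in>set Ls. lin_eq_holds L x}"
      then obtain c where xT: "x \<in> ?T" and cE: "c \<in> ?T" "\<forall>s\<in>?S. dot c s = dot c \<beta>"
        and h: "dot c x = 1 - dot c \<beta>"
        using Ls by (auto simp: E_def holds_dot)
      show "x \<in> \<rho>"
      proof (rule ccontr)
        assume "x \<notin> \<rho>"
        then have "dot c x = dot c \<beta>" using cE xT by blast
        then show False using h lt2[OF dot_lt[of c \<beta>]] by auto
      qed
    qed
    ultimately show "\<exists>Ls :: (nat list \<times> nat) list. Ls \<noteq> [] \<and> (\<forall>L\<in>set Ls. lin_eq_wf n L) \<and>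
       \<rho> = {x \<in> ?T. \<exists>L\<in>set Ls. lin_eq_holds L x}" by blast
  next
    assume "\<exists>Ls :: (nat list \<times> nat) list. Ls \<noteq> [] \<and> (\<forall>L\<in>set Ls. lin_eq_wf n L) \<and>
       \<rho> = {x \<in> ?T. \<exists>L\<in>set Ls. lin_eq_holds L x}"
    then obtain Ls :: "(nat list \<times> nat) list" where wf: "\<forall>L\<in>set Ls. lin_eq_wf n L"
      and rho: "\<rho> = {x \<in> ?T. \<exists>L\<in>set Ls. lin_eq_holds L x}" by blast
    obtain \<beta> where bS: "\<beta> \<in> ?S" using assms(2,3) by blast
    have "\<exists>Psi. is_vector_fun {0,1} n Psi \<and> vf_preserves Psi \<rho> \<and> vf_apply Psi \<alpha> = \<beta>"
      if aS: "\<alpha> \<in> ?S" for \<alpha>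
    proof -
      define Psi where "Psi = map (\<lambda>i. \<lambda>a. (a + \<alpha> ! i + \<beta> ! i) mod 2) [0..<n]"
      have lP: "length Psi = n" by (simp add: Psi_def)
      have "is_vector_fun {0,1} n Psi"
        unfolding is_vector_fun_def
      proof (intro conjI ballI lP)
        fix f assume "f \<in> set Psi"
        then obtain i where "f = (\<lambda>a. (a + \<alpha> ! i + \<beta> ! i) mod 2)" by (auto simp: Psi_def)
        then show "f ` {0,1} \<subseteq> {0,1}" using mod2_01 by auto
      qed
      moreover have app: "vf_apply Psi x = vadd (vadd x \<alpha>) \<beta>" if xT: "x \<in> ?T" for x
      proof (rule nth_equalityI)
        show "length (vf_apply Psi x) = length (vadd (vadd x \<alpha>) \<beta>)"
          using xT aS bS lP by (simp add: tuples_def)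
        fix i assume "i < length (vf_apply Psi x)"
        then have i: "i < n" using lP by simp
        then show "vf_apply Psi x ! i = vadd (vadd x \<alpha>) \<beta> ! i"
          using xT aS bS lP by (simp add: tuples_def Psi_def mod_add_left_eq)
      qed
      moreover have "vf_preserves Psi \<rho>"
        unfolding vf_preserves_def
      proof
        fix x assume xr: "x \<in> \<rho>"
        then have xT: "x \<in> ?T" using assms(2) by blast
        from xr rho obtain L where L: "L \<in> set Ls" "lin_eq_holds L x" by blast
        obtain c e where ce: "L = (c, e)" by (cases L)
        have e01: "e \<in> {0,1}" "length c = n" using wf L(1) ce by (auto simp: lin_eq_wf_def)
        have dx: "dot c x = e" using L(2) ce by (simp add: holds_dot)
        have "\<not> lin_eq_holds L \<alpha>" using aS rho L(1) by blast
        then have da: "dot c \<alpha> \<noteq> e" using ce by (simp add: holds_dot)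
        have "\<not> lin_eq_holds L \<beta>" using bS rho L(1) by blast
        then have db: "dot c \<beta> \<noteq> e" using ce by (simp add: holds_dot)
        have "dot c (vadd (vadd x \<alpha>) \<beta>) = ((dot c x + dot c \<alpha>) mod 2 + dot c \<beta>) mod 2"
          using dot_vadd[of "vadd x \<alpha>" \<beta> c] dot_vadd[of x \<alpha> c] xT aS bS by (simp add: tuples_def)
        also have "\<dots> = e"
          using dx da db e01 lt2[OF dot_lt[of c \<alpha>]] lt2[OF dot_lt[of c \<beta>]] by auto
        finally have "lin_eq_holds L (vadd (vadd x \<alpha>) \<beta>)" using ce by (simp add: holds_dot)
        moreover have "vadd (vadd x \<alpha>) \<beta> \<in> ?T" using xT aS bS vadd_tuples by blast
        ultimately have "vadd (vadd x \<alpha>) \<beta> \<in> \<rho>" using rho L(1) by blast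
        then show "vf_apply Psi x \<in> \<rho>" using app[OF xT] by simp
      qed
      moreover have "vf_apply Psi \<alpha> = \<beta>"
      proof -
        have "vadd (vadd \<alpha> \<alpha>) \<beta> = \<beta>"
        proof (rule nth_equalityI)
          show "length (vadd (vadd \<alpha> \<alpha>) \<beta>) = length \<beta>" using aS bS by (simp add: tuples_def)
          fix i assume "i < length (vadd (vadd \<alpha> \<alpha>) \<beta>)"
          then have i: "i < n" using aS bS by (simp add: tuples_def)
          show "vadd (vadd \<alpha> \<alpha>) \<beta> ! i = \<beta> ! i"
            using i aS bS nth01[of \<alpha> n i] nth01[of \<beta> n i] by (auto simp: tuples_def)
        qed
        then show ?thesis using app aS by simp
      qed
      ultimately show ?thesis by blast
    qed
    then have "key_tuple {0,1} n \<rho> \<beta>" using bS by (simp add: key_tuple_def)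
    then show "key_relation {0,1} n \<rho>" using assms(2) by (auto simp: key_relation_def)
  qed
qed

end
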